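(* Let $q\in\mathbb{C}^\times$ be not a root of unity, $k\in\mathbb{Z}_{>0}$, $\mathbf{x}=(x_1,\dots,x_k)$, $t\in\mathbb{Z}_{>0}$ and $Q,\beta\in\mathbb{C}^\times$, $\tilde\beta=(q-q^{-1})^{-1}(1-\beta^{-2})$. Then: (i) $p^{\langle Q\rangle}_t(q;\beta)(\mathbf{x})=(-1)^{t-1}q^{-t}[t]e_t(\mathbf{x})+\tilde\beta Q^{-t}+\sum_{z=1}^{t-1}(-1)^{t-z+1}\big(p^{\langle Q\rangle}_z(q;\beta)(\mathbf{x})-q^{-2(t-z)}\tilde\beta Q^{-z}\big)e_{t-z}(\mathbf{x})$; (ii) $p^{\langle Q\rangle}_{k+t}(q;\beta)(\mathbf{x})=Q^{-1}p^{\langle Q\rangle}_{k+t-1}(q;\beta)(\mathbf{x})+\sum_{z=0}^{k-1}(-1)^{k-z+1}\big(p^{\langle Q\rangle}_{t+z}(q;\beta)(\mathbf{x})-Q^{-1}p^{\langle Q\rangle}_{t+z-1}(q;\beta)(\mathbf{x})\big)e_{k-z}(\mathbf{x})$, where $p^{\langle Q\rangle}_0(q;\beta)(\mathbf{x}):=\frac{1-(\beta q^k)^{-2}}{q-q^{-1}}$.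
   Context: $[t]=(q^t-q^{-t})/(q-q^{-1})$. $e_t$ is the elementary symmetric polynomial ($e_0=1$). For $t>0$, $p_t(q)(\mathbf{x})=\sum_{\lambda\vdash t,\ \ell(\lambda)\le k}q^{-\ell(\lambda)}(q-q^{-1})^{\ell(\lambda)-1}m_\lambda(\mathbf{x})$ ($\lambda$ partitions of $t$ with at most $k$ nonzero parts, $m_\lambda$ monomial symmetric polynomial), and $p^{\langle Q\rangle}_t(q;\beta)(\mathbf{x})=p_t(q)(\mathbf{x})+\tilde\beta Q^{-t}+(q-q^{-1})\sum_{z=1}^{t-1}\tilde\beta Q^{-t+z}p_z(q)(\mathbf{x})$. *)

theory Defs
  imports Complex_Main "HOL-Library.Multiset"
begin

(* Points x = (x_1,...,x_k) are functions nat => complex, using indices 0..k-1. *)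

definition qint :: "complex \<Rightarrow> nat \<Rightarrow> complex" where
  "qint q t = (q ^ t - inverse q ^ t) / (q - inverse q)"

definition esym :: "nat \<Rightarrow> nat \<Rightarrow> (nat \<Rightarrow> complex) \<Rightarrow> complex" where
  "esym k t x = (\<Sum>S\<in>{S. S \<subseteq> {0..<k} \<and> card S = t}. \<Prod>i\<in>S. x i)"

definition partitions_le :: "nat \<Rightarrow> nat \<Rightarrow> nat multiset set" where
  "partitions_le k t = {lam. 0 \<notin># lam \<and> sum_mset lam = t \<and> size lam \<le> k}"

(* monomial symmetric polynomial m_lam in k variables, evaluated at x:
   sum of x^alpha over all exponent vectors alpha that are rearrangements of lam *)
definition msym :: "nat \<Rightarrow> nat multiset \<Rightarrow> (nat \<Rightarrow> complex) \<Rightarrow> complex" where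
  "msym k lam x = (\<Sum>\<alpha>\<in>{\<alpha> :: nat \<Rightarrow> nat. (\<forall>i\<ge>k. \<alpha> i = 0) \<and>
        image_mset \<alpha> (mset_set {i\<in>{0..<k}. \<alpha> i \<noteq> 0}) = lam}.
      \<Prod>i<k. x i ^ \<alpha> i)"

(* p_t(q)(x) for t > 0 *)
definition pq :: "complex \<Rightarrow> nat \<Rightarrow> nat \<Rightarrow> (nat \<Rightarrow> complex) \<Rightarrow> complex" where
  "pq q k t x = (\<Sum>lam\<in>partitions_le k t.
      q powi (- int (size lam)) * (q - inverse q) ^ (size lam - 1) * msym k lam x)"

definition beta_tilde :: "complex \<Rightarrow> complex \<Rightarrow> complex" where
  "beta_tilde q \<beta> = (1 - \<beta> powi (-2)) / (q - inverse q)"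

(* p^<Q>_t(q;beta)(x); for t = 0 the convention of part (ii) *)
definition pQ :: "complex \<Rightarrow> complex \<Rightarrow> complex \<Rightarrow> nat \<Rightarrow> nat \<Rightarrow> (nat \<Rightarrow> complex) \<Rightarrow> complex" where
  "pQ Q q \<beta> k t x =
    (if t = 0 then (1 - (\<beta> * q ^ k) powi (-2)) / (q - inverse q)
     else pq q k t x + beta_tilde q \<beta> * Q powi (- int t)
          + (q - inverse q) * (\<Sum>z=1..t-1. beta_tilde q \<beta> * Q powi (- int t + int z) * pq q k z x))"

end

theory Submission
  imports Defs "HOL-Computational_Algebra.Formal_Power_Series"
begin

definition fA :: "nat \<Rightarrow> nat \<Rightarrow> (nat \<Rightarrow> nat) set" where
  "fA k t = {\<alpha>. (\<forall>i\<ge>k. \<alpha> i = 0) \<and> (\<Sum>i<k. \<alpha> i) = t}"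

definition fw :: "complex \<Rightarrow> (nat \<Rightarrow> complex) \<Rightarrow> nat \<Rightarrow> (nat \<Rightarrow> nat) \<Rightarrow> complex" where
  "fw c x k \<alpha> = (\<Prod>i<k. (if \<alpha> i = 0 then 1 else c) * x i ^ \<alpha> i)"

definition FF :: "complex \<Rightarrow> (nat \<Rightarrow> complex) \<Rightarrow> nat \<Rightarrow> nat \<Rightarrow> complex" where
  "FF c x k t = (\<Sum>\<alpha>\<in>fA k t. fw c x k \<alpha>)"

lemma fA_finite: "finite (fA k t)"
proof -
  let ?L = "{l. set l \<subseteq> {0..t} \<and> length l = k}"
  have fin: "finite ?L" by (rule finite_lists_length_eq) auto
  have "fA k t \<subseteq> (\<lambda>l i. if i < k then l ! i else 0) ` ?L"
  proof
    fix \<alpha> assume a: "\<alpha> \<in> fA k t"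
    have le: "\<alpha> i \<le> t" if "i < k" for i
    proof -
      have "\<alpha> i \<le> (\<Sum>i<k. \<alpha> i)" using that by (intro member_le_sum) auto
      thus ?thesis using a by (simp add: fA_def)
    qed
    have "\<alpha> = (\<lambda>i. if i < k then map \<alpha> [0..<k] ! i else 0)"
      using a by (auto simp: fA_def fun_eq_iff)
    moreover have "map \<alpha> [0..<k] \<in> ?L" using le by auto
    ultimately show "\<alpha> \<in> (\<lambda>l i. if i < k then l ! i else 0) ` ?L" by blast
  qed
  then show ?thesis by (rule finite_subset[OF _ finite_imageI[OF fin]])
qed

lemma mem_le_sum_mset: "(a::nat) \<in># M \<Longrightarrow> a \<le> sum_mset M"
proof -
  assume "a \<in># M"
  then obtain M' where "M = add_mset a M'" by (blast dest: multi_member_split)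
  then show ?thesis by simp
qed

lemma partitions_finite: "finite (partitions_le k t)"
proof -
  have "partitions_le k t \<subseteq> (\<Union>n\<in>{0..k}. multisets_of_size {0..t} n)"
  proof
    fix lam assume l: "lam \<in> partitions_le k t"
    then have s: "size lam \<in> {0..k}" and st: "sum_mset lam = t" by (auto simp: partitions_le_def)
    have "set_mset lam \<subseteq> {0..t}"
    proof
      fix a assume "a \<in> set_mset lam"
      then have "a \<le> sum_mset lam" by (rule mem_le_sum_mset)
      then show "a \<in> {0..t}" using st by simp
    qed
    then have "lam \<in> multisets_of_size {0..t} (size lam)" by (simp add: multisets_of_size_def)
    then show "lam \<in> (\<Union>n\<in>{0..k}. multisets_of_size {0..t} n)" using s by blast
  qed
  moreover have "finite (\<Union>n\<in>{0..k}. multisets_of_size {0..t} n)"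
    by (intro finite_UN_I finite_atLeastAtMost finite_multisets_of_size)
  ultimately show ?thesis by (rule finite_subset)
qed

lemma powi_neg_nat: "(z::complex) powi (- int n) = inverse z ^ n"
  by (simp add: power_int_minus power_inverse)

lemma pq_FF:
  assumes q: "q \<noteq> 0" and t: "t > 0"
  shows "(q - inverse q) * pq q k t x = FF (1 - inverse q ^ 2) x k t"
proof -
  define c where "c = 1 - inverse q ^ 2"
  define g where "g = (\<lambda>\<alpha>::nat\<Rightarrow>nat. image_mset \<alpha> (mset_set {i\<in>{0..<k}. \<alpha> i \<noteq> 0}))"
  define B where "B = (\<lambda>lam. {\<alpha> :: nat \<Rightarrow> nat. (\<forall>i\<ge>k. \<alpha> i = 0) \<and> g \<alpha> = lam})"
  have sumg: "sum_mset (g \<alpha>) = (\<Sum>i<k. \<alpha> i)" for \<alpha>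
  proof -
    have "sum_mset (g \<alpha>) = sum \<alpha> {i\<in>{0..<k}. \<alpha> i \<noteq> 0}"
      by (simp add: g_def sum_unfold_sum_mset)
    also have "\<dots> = (\<Sum>i<k. \<alpha> i)"
      by (subst sum.inter_filter) (auto intro: sum.cong simp: lessThan_atLeast0)
    finally show ?thesis .
  qed
  have sizeg: "size (g \<alpha>) = card {i\<in>{0..<k}. \<alpha> i \<noteq> 0}" for \<alpha>
    by (simp add: g_def)
  have img: "g ` fA k t \<subseteq> partitions_le k t"
  proof
    fix lam assume "lam \<in> g ` fA k t"
    then obtain \<alpha> where a: "\<alpha> \<in> fA k t" and l: "lam = g \<alpha>" by blast
    have "card {i\<in>{0..<k}. \<alpha> i \<noteq> 0} \<le> card {0..<k}" by (intro card_mono) auto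
    moreover have "0 \<notin># g \<alpha>" by (auto simp: g_def)
    ultimately show "lam \<in> partitions_le k t"
      using a unfolding l partitions_le_def
      by (auto simp: sumg sizeg fA_def)
  qed
  have blk: "{\<alpha> \<in> fA k t. g \<alpha> = lam} = B lam" if "lam \<in> partitions_le k t" for lam
    using that by (auto simp: B_def fA_def partitions_le_def sumg[symmetric])
  have wt: "fw c x k \<alpha> = c ^ size lam * (\<Prod>i<k. x i ^ \<alpha> i)" if "\<alpha> \<in> B lam" for \<alpha> lam
  proof -
    have "fw c x k \<alpha> = (\<Prod>i<k. (if \<alpha> i = 0 then 1 else c)) * (\<Prod>i<k. x i ^ \<alpha> i)"
      by (simp add: fw_def prod.distrib)
    also have "(\<Prod>i<k. (if \<alpha> i = 0 then 1 else c)) = (\<Prod>i\<in>{i\<in>{0..<k}. \<alpha> i \<noteq> 0}. c)"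
      by (subst prod.inter_filter) (auto intro: prod.cong simp: lessThan_atLeast0)
    also have "\<dots> = c ^ card {i\<in>{0..<k}. \<alpha> i \<noteq> 0}" by simp
    also have "card {i\<in>{0..<k}. \<alpha> i \<noteq> 0} = size lam"
      using that sizeg[of \<alpha>] by (simp add: B_def)
    finally show ?thesis .
  qed
  have coef: "(q - inverse q) * (q powi (- int n) * (q - inverse q) ^ (n - 1)) = c ^ n" if "n > 0" for n
  proof -
    have "(q - inverse q) * (q powi (- int n) * (q - inverse q) ^ (n - 1))
        = (inverse q * (q - inverse q)) ^ n"
      using that by (simp add: powi_neg_nat power_mult_distrib power_Suc[symmetric] del: power_Suc)
    also have "inverse q * (q - inverse q) = c" using q by (simp add: c_def field_simps power2_eq_square)
    finally show ?thesis .
  qed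
  have "(q - inverse q) * pq q k t x
      = (\<Sum>lam\<in>partitions_le k t. (q - inverse q) * (q powi (- int (size lam)) * (q - inverse q) ^ (size lam - 1)) * msym k lam x)"
    by (simp add: pq_def sum_distrib_left mult.assoc)
  also have "\<dots> = (\<Sum>lam\<in>partitions_le k t. \<Sum>\<alpha>\<in>{\<alpha> \<in> fA k t. g \<alpha> = lam}. fw c x k \<alpha>)"
  proof (rule sum.cong[OF refl])
    fix lam assume lp: "lam \<in> partitions_le k t"
    have "lam \<noteq> {#}" using lp t by (auto simp: partitions_le_def)
    then have sz: "size lam > 0" by (simp add: nonempty_has_size)
    have "(q - inverse q) * (q powi (- int (size lam)) * (q - inverse q) ^ (size lam - 1)) * msym k lam x
        = c ^ size lam * msym k lam x" by (simp only: coef[OF sz])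
    also have "\<dots> = (\<Sum>\<alpha>\<in>B lam. c ^ size lam * (\<Prod>i<k. x i ^ \<alpha> i))"
      by (simp add: msym_def B_def g_def sum_distrib_left)
    also have "\<dots> = (\<Sum>\<alpha>\<in>B lam. fw c x k \<alpha>)" by (rule sum.cong) (auto simp: wt)
    finally show "(q - inverse q) * (q powi (- int (size lam)) * (q - inverse q) ^ (size lam - 1)) * msym k lam x
        = (\<Sum>\<alpha>\<in>{\<alpha> \<in> fA k t. g \<alpha> = lam}. fw c x k \<alpha>)" using blk[OF lp] by simp
  qed
  also have "\<dots> = FF c x k t"
    unfolding FF_def by (rule sum.group[OF fA_finite partitions_finite img])
  finally show ?thesis by (simp add: c_def)
qed

definition gc :: "complex \<Rightarrow> complex \<Rightarrow> nat \<Rightarrow> complex" where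
  "gc c y a = (if a = 0 then 1 else c) * y ^ a"

lemma FF_zero: "FF c x 0 t = (if t = 0 then 1 else 0)"
proof -
  have "fA 0 t = (if t = 0 then {\<lambda>_. 0} else {})" by (auto simp: fA_def)
  then show ?thesis by (simp add: FF_def fw_def)
qed

lemma FF_Suc: "FF c x (Suc k) t = (\<Sum>a=0..t. gc c (x k) a * FF c x k (t - a))"
proof -
  let ?h = "\<lambda>\<alpha>::nat\<Rightarrow>nat. \<alpha> k"
  have img: "?h ` fA (Suc k) t \<subseteq> {0..t}"
  proof
    fix a assume "a \<in> ?h ` fA (Suc k) t"
    then obtain \<alpha> where a: "\<alpha> \<in> fA (Suc k) t" "a = \<alpha> k" by blast
    have "\<alpha> k \<le> (\<Sum>i<Suc k. \<alpha> i)" by (intro member_le_sum) auto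
    then show "a \<in> {0..t}" using a by (simp add: fA_def)
  qed
  have FF1: "FF c x (Suc k) t = (\<Sum>a=0..t. \<Sum>\<alpha>\<in>{\<alpha>\<in>fA (Suc k) t. \<alpha> k = a}. fw c x (Suc k) \<alpha>)"
    unfolding FF_def by (rule sum.group[symmetric, OF fA_finite _ img]) simp
  have blk: "(\<Sum>\<alpha>\<in>{\<alpha>\<in>fA (Suc k) t. \<alpha> k = a}. fw c x (Suc k) \<alpha>) = gc c (x k) a * FF c x k (t - a)"
    if "a \<in> {0..t}" for a
  proof -
    let ?u = "\<lambda>\<beta>::nat\<Rightarrow>nat. \<beta>(k := a)"
    have seteq: "{\<alpha>\<in>fA (Suc k) t. \<alpha> k = a} = ?u ` fA k (t - a)"
    proof (intro equalityI subsetI)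
      fix \<alpha> assume "\<alpha> \<in> {\<alpha>\<in>fA (Suc k) t. \<alpha> k = a}"
      then have A: "\<forall>i\<ge>Suc k. \<alpha> i = 0" "(\<Sum>i<k. \<alpha> i) + a = t" "\<alpha> k = a"
        by (auto simp: fA_def)
      have "(\<Sum>i<k. (\<alpha>(k:=0)) i) = (\<Sum>i<k. \<alpha> i)" by (intro sum.cong) auto
      then have "\<alpha>(k:=0) \<in> fA k (t - a)" using A
        by (auto simp: fA_def)
      moreover have "\<alpha> = ?u (\<alpha>(k:=0))" using A by auto
      ultimately show "\<alpha> \<in> ?u ` fA k (t - a)" by blast
    next
      fix \<alpha> assume "\<alpha> \<in> ?u ` fA k (t - a)"
      then obtain \<beta> where B: "\<beta> \<in> fA k (t - a)" "\<alpha> = ?u \<beta>" by blast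
      have "(\<Sum>i<k. \<alpha> i) = (\<Sum>i<k. \<beta> i)" using B(2) by (intro sum.cong) auto
      then show "\<alpha> \<in> {\<alpha>\<in>fA (Suc k) t. \<alpha> k = a}" using B that
        by (auto simp: fA_def)
    qed
    have inj: "inj_on ?u (fA k (t - a))"
    proof (rule inj_onI)
      fix \<beta>1 \<beta>2 assume A: "\<beta>1 \<in> fA k (t - a)" "\<beta>2 \<in> fA k (t - a)" "?u \<beta>1 = ?u \<beta>2"
      show "\<beta>1 = \<beta>2"
      proof
        fix i show "\<beta>1 i = \<beta>2 i"
        proof (cases "i = k")
          case True then show ?thesis using A(1,2) by (simp add: fA_def)
        next
          case False then show ?thesis using fun_cong[OF A(3), of i] by simp
        qed
      qed
    qed
    have fwu: "fw c x (Suc k) (?u \<beta>) = gc c (x k) a * fw c x k \<beta>" for \<beta>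
    proof -
      have "fw c x k (?u \<beta>) = fw c x k \<beta>" unfolding fw_def by (intro prod.cong) auto
      then show ?thesis by (simp add: fw_def gc_def mult_ac)
    qed
    show ?thesis
      by (simp add: seteq sum.reindex[OF inj] fwu FF_def sum_distrib_left)
  qed
  show ?thesis using FF1 blk by simp
qed

lemma sub_fin: "S \<subseteq> {0..<(k::nat)} \<Longrightarrow> finite S"
  by (erule finite_subset) simp

lemma esym_0: "esym k 0 x = 1"
proof -
  have "{S. S \<subseteq> {0..<k} \<and> card S = 0} = {{}}"
  proof (intro equalityI subsetI)
    fix S assume "S \<in> {S. S \<subseteq> {0..<k} \<and> card S = 0}"
    then have "S \<subseteq> {0..<k}" "card S = 0" by auto
    moreover from this(1) have "finite S" by (rule sub_fin)
    ultimately show "S \<in> {{}}" by simp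
  qed simp
  then show ?thesis by (simp add: esym_def)
qed

lemma esym_zero_vars: "esym 0 (Suc m) x = 0"
  by (simp add: esym_def)

lemma esym_big: "m > k \<Longrightarrow> esym k m x = 0"
proof -
  assume m: "m > k"
  have "{S. S \<subseteq> {0..<k} \<and> card S = m} = {}"
  proof (intro equalityI subsetI)
    fix S assume "S \<in> {S. S \<subseteq> {0..<k} \<and> card S = m}"
    then have "S \<subseteq> {0..<k}" "card S = m" by auto
    then have "m \<le> k" using card_mono[of "{0..<k}" S] by simp
    then show "S \<in> {}" using m by simp
  qed simp
  then show ?thesis by (simp only: esym_def sum.empty)
qed

lemma esym_Suc: "esym (Suc k) (Suc m) x = esym k (Suc m) x + x k * esym k m x"
proof -
  let ?A = "{S. S \<subseteq> {0..<k} \<and> card S = Suc m}"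
  let ?B = "{S. S \<subseteq> {0..<k} \<and> card S = m}"
  have fA: "finite ?A" "finite ?B"
    by (rule finite_subset[of _ "Pow {0..<k}"]; auto)+
  have seteq: "{S. S \<subseteq> {0..<Suc k} \<and> card S = Suc m} = ?A \<union> insert k ` ?B"
  proof (intro equalityI subsetI)
    fix S assume S: "S \<in> {S. S \<subseteq> {0..<Suc k} \<and> card S = Suc m}"
    then have S1: "S \<subseteq> {0..<Suc k}" and S2: "card S = Suc m" by auto
    have fin: "finite S" using S1 by (rule sub_fin)
    show "S \<in> ?A \<union> insert k ` ?B"
    proof (cases "k \<in> S")
      case True
      have "S - {k} \<subseteq> {0..<k}" using S1 by (auto simp: less_Suc_eq)
      moreover have "card (S - {k}) = m" using S2 True fin by simp
      ultimately have "S - {k} \<in> ?B" by simp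
      moreover have "S = insert k (S - {k})" using True by auto
      ultimately show ?thesis by blast
    next
      case False
      then have "S \<subseteq> {0..<k}" using S1 by (auto simp: less_Suc_eq)
      then show ?thesis using S2 by simp
    qed
  next
    fix S assume "S \<in> ?A \<union> insert k ` ?B"
    then show "S \<in> {S. S \<subseteq> {0..<Suc k} \<and> card S = Suc m}"
    proof
      assume "S \<in> ?A" then show ?thesis by auto
    next
      assume "S \<in> insert k ` ?B"
      then obtain T where T: "T \<in> ?B" "S = insert k T" by blast
      have T1: "T \<subseteq> {0..<k}" and T2: "card T = m" using T(1) by auto
      have "finite T" using T1 by (rule sub_fin)
      moreover have "k \<notin> T" using T1 by auto
      ultimately have "card S = Suc m" using T(2) T2 by simp
      moreover have "S \<subseteq> {0..<Suc k}" using T(2) T1 by auto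
      ultimately show ?thesis by simp
    qed
  qed
  have disj: "?A \<inter> insert k ` ?B = {}" by auto
  have inj: "inj_on (insert k) ?B"
  proof (rule inj_onI)
    fix T1 T2 assume A: "T1 \<in> ?B" "T2 \<in> ?B" "insert k T1 = insert k T2"
    have "k \<notin> T1" "k \<notin> T2" using A(1,2) by auto
    then have "T1 = insert k T1 - {k}" "T2 = insert k T2 - {k}" by simp_all
    then show "T1 = T2" using A(3) by simp
  qed
  have pins: "(\<Prod>i\<in>insert k T. x i) = x k * (\<Prod>i\<in>T. x i)" if "T \<in> ?B" for T
  proof -
    have T1: "T \<subseteq> {0..<k}" using that by auto
    then have "finite T" by (rule sub_fin)
    moreover have "k \<notin> T" using T1 by auto
    ultimately show ?thesis by simp
  qed
  have "esym (Suc k) (Suc m) x = (\<Sum>S\<in>?A. \<Prod>i\<in>S. x i) + (\<Sum>S\<in>insert k ` ?B. \<Prod>i\<in>S. x i)"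
    unfolding esym_def seteq by (rule sum.union_disjoint[OF _ _ disj]) (use fA in auto)
  also have "(\<Sum>S\<in>insert k ` ?B. \<Prod>i\<in>S. x i) = (\<Sum>T\<in>?B. x k * (\<Prod>i\<in>T. x i))"
    by (simp add: sum.reindex[OF inj] pins)
  finally show ?thesis by (simp add: esym_def sum_distrib_left)
qed

definition Fps :: "complex \<Rightarrow> (nat \<Rightarrow> complex) \<Rightarrow> nat \<Rightarrow> complex fps" where
  "Fps c x k = Abs_fps (FF c x k)"
definition Ep :: "complex \<Rightarrow> (nat \<Rightarrow> complex) \<Rightarrow> nat \<Rightarrow> complex fps" where
  "Ep s x k = Abs_fps (\<lambda>t. (-1) ^ t * s ^ t * esym k t x)"

lemma Fps_Suc: "Fps c x (Suc k) = Abs_fps (gc c (x k)) * Fps c x k"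
  by (rule fps_ext) (simp add: Fps_def FF_Suc fps_mult_nth)

lemma EpSuc: "Ep s x (Suc k) = (1 - fps_const (s * x k) * fps_X) * Ep s x k"
proof (rule fps_ext)
  fix n
  show "fps_nth (Ep s x (Suc k)) n = fps_nth ((1 - fps_const (s * x k) * fps_X) * Ep s x k) n"
  proof (cases n)
    case 0 then show ?thesis by (simp add: Ep_def esym_0)
  next
    case (Suc m)
    have "fps_nth ((1 - fps_const (s * x k) * fps_X) * Ep s x k) n
        = fps_nth (Ep s x k) n - s * x k * fps_nth (fps_X * Ep s x k) n"
      by (simp add: ring_distribs mult.assoc)
    then show ?thesis using Suc by (simp add: Ep_def esym_Suc algebra_simps)
  qed
qed

lemma G_lin: "Abs_fps (gc (1 - s) y) * (1 - fps_const y * fps_X) = 1 - fps_const (s * y) * fps_X"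
proof (rule fps_ext)
  fix n
  have e: "Abs_fps (gc (1 - s) y) * (1 - fps_const y * fps_X)
      = Abs_fps (gc (1 - s) y) - fps_const y * (fps_X * Abs_fps (gc (1 - s) y))"
    by (simp add: algebra_simps)
  have "fps_nth (Abs_fps (gc (1 - s) y) * (1 - fps_const y * fps_X)) n
      = gc (1 - s) y n - y * fps_nth (fps_X * Abs_fps (gc (1 - s) y)) n"
    unfolding e by simp
  also have "\<dots> = fps_nth (1 - fps_const (s * y) * fps_X) n"
  proof (cases n)
    case 0 then show ?thesis by (simp add: gc_def)
  next
    case (Suc m)
    then show ?thesis by (cases m) (simp_all add: gc_def algebra_simps)
  qed
  finally show "fps_nth (Abs_fps (gc (1 - s) y) * (1 - fps_const y * fps_X)) n = fps_nth (1 - fps_const (s * y) * fps_X) n" .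
qed

lemma key_fps: "Fps (1 - s) x k * Ep 1 x k = Ep s x k"
proof (induction k)
  case 0
  have "Fps (1 - s) x 0 = 1" by (rule fps_ext) (simp add: Fps_def FF_zero)
  moreover have "Ep s' x 0 = 1" for s' by (rule fps_ext) (auto simp: Ep_def esym_0 esym_zero_vars gr0_conv_Suc)
  ultimately show ?case by simp
next
  case (Suc k)
  have "Fps (1 - s) x (Suc k) * Ep 1 x (Suc k)
      = (Abs_fps (gc (1 - s) (x k)) * (1 - fps_const (x k) * fps_X)) * (Fps (1 - s) x k * Ep 1 x k)"
    by (simp add: Fps_Suc EpSuc mult_ac)
  also have "\<dots> = (1 - fps_const (s * x k) * fps_X) * Ep s x k" by (simp add: G_lin Suc.IH)
  finally show ?case by (simp add: EpSuc)
qed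

lemma FF_0: "FF c x k 0 = 1"
proof -
  have "fA k 0 = {\<lambda>_. 0}"
  proof (intro equalityI subsetI)
    fix \<alpha> assume a: "\<alpha> \<in> fA k 0"
    have "\<alpha> i = 0" for i
    proof (cases "i < k")
      case True
      have "\<alpha> i \<le> (\<Sum>i<k. \<alpha> i)" using True by (intro member_le_sum) auto
      then show ?thesis using a by (simp add: fA_def)
    next
      case False then show ?thesis using a by (simp add: fA_def)
    qed
    then show "\<alpha> \<in> {\<lambda>_. 0}" by (simp add: fun_eq_iff)
  qed (simp add: fA_def)
  then show ?thesis by (simp add: FF_def fw_def)
qed

lemma D_nz:
  assumes "q \<noteq> 0" "\<forall>n>0. q ^ n \<noteq> (1::complex)"
  shows "q - inverse q \<noteq> 0"
proof
  assume "q - inverse q = 0"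
  then have "q * q = q * inverse q" by simp
  then have "q ^ 2 = 1" using assms(1) by (simp add: power2_eq_square)
  then show False using assms(2)[rule_format, of 2] by simp
qed

lemma fps_facts:
  fixes q Q \<beta> :: complex and k :: nat and x :: "nat \<Rightarrow> complex"
  assumes q: "q \<noteq> 0" and D: "q - inverse q \<noteq> 0"
  defines "D \<equiv> q - inverse q"
    and "s2 \<equiv> inverse q ^ 2"
    and "b \<equiv> beta_tilde q \<beta>"
    and "PP \<equiv> Abs_fps (\<lambda>i. if i = 0 then 0 else pq q k i x)"
    and "PQ \<equiv> Abs_fps (\<lambda>i. if i = 0 then 0 else pQ Q q \<beta> k i x)"
    and "RR \<equiv> Abs_fps (\<lambda>i. if i = 0 then 0 else inverse Q ^ i)"
  shows "fps_const D * (PQ * Ep 1 x k) = Ep s2 x k - Ep 1 x k + fps_const (D * b) * (RR * Ep s2 x k)"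
proof -
  have F: "Fps (1 - s2) x k = 1 + fps_const D * PP"
  proof (rule fps_ext)
    fix n show "fps_nth (Fps (1 - s2) x k) n = fps_nth (1 + fps_const D * PP) n"
    proof (cases "n = 0")
      case True then show ?thesis by (simp add: Fps_def FF_0 PP_def)
    next
      case False then show ?thesis
        using pq_FF[OF q, of n k x] by (simp add: Fps_def PP_def D_def s2_def)
    qed
  qed
  have K: "fps_const D * PP * Ep 1 x k = Ep s2 x k - Ep 1 x k"
  proof -
    have "(1 + fps_const D * PP) * Ep 1 x k = Ep s2 x k" using key_fps[of s2 x k] F by simp
    then show ?thesis by (simp add: algebra_simps)
  qed
  have PQeq: "PQ = PP * (1 + fps_const (D * b) * RR) + fps_const b * RR"
  proof (rule fps_ext)
    fix n show "fps_nth PQ n = fps_nth (PP * (1 + fps_const (D * b) * RR) + fps_const b * RR) n"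
    proof (cases "n = 0")
      case True then show ?thesis by (simp add: PQ_def PP_def RR_def)
    next
      case False
      have conv: "(\<Sum>i=0..n. fps_nth PP i * fps_nth RR (n - i)) = (\<Sum>z=1..n-1. pq q k z x * inverse Q ^ (n - z))"
      proof -
        have "(\<Sum>i=0..n. fps_nth PP i * fps_nth RR (n - i)) = (\<Sum>i=1..n. fps_nth PP i * fps_nth RR (n - i))"
          by (simp add: sum.atLeast_Suc_atMost PP_def)
        also have "\<dots> = (\<Sum>i=1..n-1. fps_nth PP i * fps_nth RR (n - i))"
          using False by (cases n) (simp_all add: RR_def)
        also have "\<dots> = (\<Sum>z=1..n-1. pq q k z x * inverse Q ^ (n - z))"
          by (rule sum.cong) (auto simp: PP_def RR_def)
        finally show ?thesis .
      qed
      have pw: "Q powi (- int n + int z) = inverse Q ^ (n - z)" if "z \<le> n" for z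
      proof -
        have "Q powi (- int n + int z) = Q powi (- int (n - z))" using that by (simp add: of_nat_diff)
        also have "\<dots> = inverse Q ^ (n - z)" by (rule powi_neg_nat)
        finally show ?thesis .
      qed
      have PQn: "fps_nth PQ n = pQ Q q \<beta> k n x" using False by (simp add: PQ_def)
      have "fps_nth (PP * (1 + fps_const (D * b) * RR) + fps_const b * RR) n
          = fps_nth PP n + D * b * (\<Sum>i=0..n. fps_nth PP i * fps_nth RR (n - i)) + b * fps_nth RR n"
      proof -
        have e2: "PP * (1 + fps_const (D * b) * RR) + fps_const b * RR
            = PP + fps_const (D * b) * (PP * RR) + fps_const b * RR" by (simp add: algebra_simps)
        show ?thesis unfolding e2 by (simp add: fps_mult_nth[of PP RR])
      qed
      also have "\<dots> = pq q k n x + D * b * (\<Sum>z=1..n-1. pq q k z x * inverse Q ^ (n - z)) + b * inverse Q ^ n"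
        unfolding conv using False by (simp add: PP_def RR_def)
      also have "\<dots> = pQ Q q \<beta> k n x"
      proof -
        have S: "(\<Sum>z=1..n-1. b * Q powi (- int n + int z) * pq q k z x)
            = b * (\<Sum>z=1..n-1. pq q k z x * inverse Q ^ (n - z))"
          unfolding sum_distrib_left
        proof (rule sum.cong[OF refl])
          fix z assume "z \<in> {1..n-1}"
          then have "z \<le> n" by auto
          then show "b * Q powi (- int n + int z) * pq q k z x = b * (pq q k z x * inverse Q ^ (n - z))"
            using pw[of z] by (simp add: mult_ac)
        qed
        show ?thesis using False unfolding pQ_def b_def[symmetric] D_def[symmetric] S
          by (simp add: powi_neg_nat mult_ac)
      qed
      finally show ?thesis unfolding PQn by (rule sym)
    qed
  qed
  have "fps_const D * (PQ * Ep 1 x k)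
      = (fps_const D * PP * Ep 1 x k) * (1 + fps_const (D * b) * RR) + fps_const (D * b) * (RR * Ep 1 x k)"
    unfolding PQeq by (simp add: algebra_simps flip: fps_const_mult)
  also have "\<dots> = (Ep s2 x k - Ep 1 x k) * (1 + fps_const (D * b) * RR) + fps_const (D * b) * (RR * Ep 1 x k)"
    by (simp only: K)
  also have "\<dots> = Ep s2 x k - Ep 1 x k + fps_const (D * b) * (RR * Ep s2 x k)"
    by (simp add: algebra_simps)
  finally show ?thesis .
qed

lemma fps_facts2:
  fixes q Q \<beta> :: complex and k :: nat and x :: "nat \<Rightarrow> complex"
  assumes q: "q \<noteq> 0" and Dnz: "q - inverse q \<noteq> 0"
  defines "D \<equiv> q - inverse q"
    and "s2 \<equiv> inverse q ^ 2"
    and "b \<equiv> beta_tilde q \<beta>"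
    and "PQ \<equiv> Abs_fps (\<lambda>i. if i = 0 then 0 else pQ Q q \<beta> k i x)"
    and "RR \<equiv> Abs_fps (\<lambda>i. if i = 0 then 0 else inverse Q ^ i)"
    and "iQ \<equiv> inverse Q"
    and "p0 \<equiv> pQ Q q \<beta> k 0 x"
    and "V \<equiv> (1 - fps_const (inverse Q) * fps_X) * Abs_fps (\<lambda>i. pQ Q q \<beta> k i x)"
  shows "fps_const D * (Ep 1 x k * V) =
     (1 - fps_const iQ * fps_X) * (fps_const (D * p0) * Ep 1 x k + Ep s2 x k - Ep 1 x k)
     + fps_const (D * b * iQ) * (fps_X * Ep s2 x k)"
proof -
  have FA: "fps_const D * (PQ * Ep 1 x k) = Ep s2 x k - Ep 1 x k + fps_const (D * b) * (RR * Ep s2 x k)"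
    unfolding D_def s2_def b_def PQ_def RR_def by (rule fps_facts[OF q Dnz])
  have P0: "Abs_fps (\<lambda>i. pQ Q q \<beta> k i x) = fps_const p0 + PQ"
  proof (rule fps_ext)
    fix n show "fps_nth (Abs_fps (\<lambda>i. pQ Q q \<beta> k i x)) n = fps_nth (fps_const p0 + PQ) n"
      by (cases "n = 0") (simp_all add: p0_def PQ_def)
  qed
  have RX: "(1 - fps_const iQ * fps_X) * RR = fps_const iQ * fps_X"
  proof (rule fps_ext)
    fix n
    have e: "(1 - fps_const iQ * fps_X) * RR = RR - fps_const iQ * (fps_X * RR)"
      by (simp add: algebra_simps)
    show "fps_nth ((1 - fps_const iQ * fps_X) * RR) n = fps_nth (fps_const iQ * fps_X) n"
      unfolding e
    proof (cases n)
      case 0 then show "fps_nth (RR - fps_const iQ * (fps_X * RR)) n = fps_nth (fps_const iQ * fps_X) n"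
        by (simp add: RR_def)
    next
      case (Suc m)
      then show "fps_nth (RR - fps_const iQ * (fps_X * RR)) n = fps_nth (fps_const iQ * fps_X) n"
        by (cases m) (simp_all add: RR_def iQ_def)
    qed
  qed
  have "fps_const D * (Ep 1 x k * V)
      = (1 - fps_const iQ * fps_X) * (fps_const (D * p0) * Ep 1 x k + fps_const D * (PQ * Ep 1 x k))"
    unfolding V_def P0 iQ_def[symmetric] by (simp add: algebra_simps flip: fps_const_mult)
  also have "\<dots> = (1 - fps_const iQ * fps_X) * (fps_const (D * p0) * Ep 1 x k + Ep s2 x k - Ep 1 x k)
      + fps_const (D * b) * (((1 - fps_const iQ * fps_X) * RR) * Ep s2 x k)"
    unfolding FA by (simp add: algebra_simps)
  also have "\<dots> = (1 - fps_const iQ * fps_X) * (fps_const (D * p0) * Ep 1 x k + Ep s2 x k - Ep 1 x k)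
      + fps_const (D * b * iQ) * (fps_X * Ep s2 x k)"
    unfolding RX by (simp add: algebra_simps flip: fps_const_mult)
  finally show ?thesis .
qed

lemma split0: "(\<Sum>i=0..Suc m. g i) = g 0 + (\<Sum>i=1..m. g i) + (g (Suc m) :: complex)"
  by (simp add: sum.atLeast_Suc_atMost)

lemma Ep_nth: "fps_nth (Ep s x k) j = (-1) ^ j * s ^ j * esym k j x"
  by (simp add: Ep_def)

lemma pw2: "(z::complex) powi (-2 * int j) = (inverse z ^ 2) ^ j"
proof -
  have "z powi (-2 * int j) = z powi (- int (2 * j))" by simp
  also have "\<dots> = inverse z ^ (2 * j)" by (rule powi_neg_nat)
  finally show ?thesis by (simp add: power_mult)
qed

lemma part1:
  fixes q Q \<beta> :: complex and k t :: nat and x :: "nat \<Rightarrow> complex"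
  assumes q: "q \<noteq> 0" and Dnz: "q - inverse q \<noteq> 0" and t: "t > 0"
  shows "pQ Q q \<beta> k t x =
           (-1) ^ (t - 1) * q powi (- int t) * qint q t * esym k t x
           + beta_tilde q \<beta> * Q powi (- int t)
           + (\<Sum>z=1..t-1. (-1) ^ (t - z + 1) *
               (pQ Q q \<beta> k z x - q powi (-2 * int (t - z)) * beta_tilde q \<beta> * Q powi (- int z))
               * esym k (t - z) x)"
proof -
  define D where "D = q - inverse q"
  define s2 where "s2 = inverse q ^ 2"
  define b where "b = beta_tilde q \<beta>"
  define PQ where "PQ = Abs_fps (\<lambda>i. if i = 0 then 0 else pQ Q q \<beta> k i x)"
  define RR where "RR = Abs_fps (\<lambda>i. if i = 0 then 0 else inverse Q ^ i)"
  define e where "e = (\<lambda>j. esym k j x)"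
  define p where "p = (\<lambda>j. pQ Q q \<beta> k j x)"
  obtain m where tm: "t = Suc m" using t by (cases t) auto
  have FA: "fps_const D * (PQ * Ep 1 x k) = Ep s2 x k - Ep 1 x k + fps_const (D * b) * (RR * Ep s2 x k)"
    unfolding D_def s2_def b_def PQ_def RR_def by (rule fps_facts[OF q Dnz])
  have c1: "D * (\<Sum>i=0..t. fps_nth PQ i * fps_nth (Ep 1 x k) (t - i))
      = fps_nth (Ep s2 x k) t - fps_nth (Ep 1 x k) t + D * b * (\<Sum>i=0..t. fps_nth RR i * fps_nth (Ep s2 x k) (t - i))"
    using arg_cong[OF FA, of "\<lambda>f. fps_nth f t"]
    by (simp only: fps_mult_left_const_nth fps_add_nth fps_sub_nth fps_mult_nth[of PQ "Ep 1 x k"]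
        fps_mult_nth[of RR "Ep s2 x k"] mult.assoc)
  define A where "A = (\<Sum>z=1..m. p z * ((-1) ^ (t - z) * e (t - z)))"
  define Bs where "Bs = (\<Sum>z=1..m. inverse Q ^ z * ((-1) ^ (t - z) * s2 ^ (t - z) * e (t - z)))"
  have L: "(\<Sum>i=0..t. fps_nth PQ i * fps_nth (Ep 1 x k) (t - i)) = A + p t"
  proof -
    have "(\<Sum>i=0..t. fps_nth PQ i * fps_nth (Ep 1 x k) (t - i))
        = 0 + (\<Sum>i=1..m. fps_nth PQ i * fps_nth (Ep 1 x k) (t - i)) + p t"
      unfolding tm split0 by (simp add: PQ_def Ep_nth esym_0 p_def)
    also have "(\<Sum>i=1..m. fps_nth PQ i * fps_nth (Ep 1 x k) (t - i)) = A"
      unfolding A_def by (rule sum.cong) (auto simp: PQ_def Ep_nth p_def e_def)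
    finally show ?thesis by simp
  qed
  have R: "(\<Sum>i=0..t. fps_nth RR i * fps_nth (Ep s2 x k) (t - i)) = Bs + inverse Q ^ t"
  proof -
    have "(\<Sum>i=0..t. fps_nth RR i * fps_nth (Ep s2 x k) (t - i))
        = 0 + (\<Sum>i=1..m. fps_nth RR i * fps_nth (Ep s2 x k) (t - i)) + inverse Q ^ t"
      unfolding tm split0 by (simp add: RR_def Ep_nth esym_0)
    also have "(\<Sum>i=1..m. fps_nth RR i * fps_nth (Ep s2 x k) (t - i)) = Bs"
      unfolding Bs_def by (rule sum.cong) (auto simp: RR_def Ep_nth e_def)
    finally show ?thesis by simp
  qed
  define X where "X = (-1) ^ t * s2 ^ t * e t - (-1) ^ t * e t"
  have c2: "D * (A + p t) = X + D * (b * (Bs + inverse Q ^ t))"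
    using c1 unfolding L R by (simp add: Ep_nth X_def e_def mult.assoc)
  have c3: "p t = X / D + b * (Bs + inverse Q ^ t) - A"
  proof -
    have "A + p t = X / D + b * (Bs + inverse Q ^ t)"
      using c2 Dnz unfolding D_def[symmetric] by (simp add: field_simps)
    then show ?thesis by (simp add: algebra_simps)
  qed
  have T1: "(-1) ^ (t - 1) * q powi (- int t) * qint q t * esym k t x = X / D"
  proof -
    have sq: "inverse q ^ t * q ^ t = 1" using q by (simp add: power_mult_distrib[symmetric])
    have s2t: "s2 ^ t = inverse q ^ t * inverse q ^ t"
      by (simp add: s2_def power_mult[symmetric] mult_2 power_add)
    have "(-1) ^ (t - 1) * q powi (- int t) * qint q t * esym k t x
        = - ((-1) ^ t) * (inverse q ^ t * (q ^ t - inverse q ^ t)) / D * e t"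
    proof -
      have a: "q powi (- int t) = inverse q ^ t" by (rule powi_neg_nat)
      have b: "(-1) ^ (t - 1) = - ((-1) ^ t :: complex)" using tm by simp
      show ?thesis unfolding a b by (simp add: qint_def D_def e_def)
    qed
    also have "inverse q ^ t * (q ^ t - inverse q ^ t) = 1 - s2 ^ t"
      using sq s2t by (simp add: algebra_simps)
    finally show ?thesis by (simp add: X_def algebra_simps diff_divide_distrib)
  qed
  have T3: "(\<Sum>z=1..t-1. (-1) ^ (t - z + 1) *
               (pQ Q q \<beta> k z x - q powi (-2 * int (t - z)) * beta_tilde q \<beta> * Q powi (- int z)) * esym k (t - z) x)
        = b * Bs - A"
  proof -
    have "(\<Sum>z=1..t-1. (-1) ^ (t - z + 1) *
               (pQ Q q \<beta> k z x - q powi (-2 * int (t - z)) * beta_tilde q \<beta> * Q powi (- int z)) * esym k (t - z) x)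
        = (\<Sum>z=1..m. b * (inverse Q ^ z * ((-1) ^ (t - z) * s2 ^ (t - z) * e (t - z)))
                     - p z * ((-1) ^ (t - z) * e (t - z)))"
    proof -
      have rng: "t - 1 = m" using tm by simp
      show ?thesis unfolding rng
      proof (rule sum.cong[OF refl])
        fix z assume z: "z \<in> {1..m}"
        have a: "q powi (-2 * int (t - z)) = s2 ^ (t - z)" by (simp only: pw2 s2_def)
        have b': "Q powi (- int z) = inverse Q ^ z" by (rule powi_neg_nat)
        have c: "(-1) ^ (t - z + 1) = - ((-1) ^ (t - z) :: complex)" by simp
        show "(-1) ^ (t - z + 1) * (pQ Q q \<beta> k z x - q powi (-2 * int (t - z)) * beta_tilde q \<beta> * Q powi (- int z)) * esym k (t - z) x
          = b * (inverse Q ^ z * ((-1) ^ (t - z) * s2 ^ (t - z) * e (t - z))) - p z * ((-1) ^ (t - z) * e (t - z))"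
          unfolding a b' c by (simp add: algebra_simps p_def e_def b_def)
      qed
    qed
    also have "\<dots> = b * Bs - A"
      by (simp add: A_def Bs_def sum_subtractf sum_distrib_left)
    finally show ?thesis .
  qed
  have c4: "pQ Q q \<beta> k t x = X / D + b * (Bs + inverse Q ^ t) - A" using c3 by (simp add: p_def)
  show ?thesis
    unfolding T1 T3 c4 by (simp add: powi_neg_nat b_def algebra_simps)
qed

lemma part2:
  fixes q Q \<beta> :: complex and k t :: nat and x :: "nat \<Rightarrow> complex"
  assumes q: "q \<noteq> 0" and Dnz: "q - inverse q \<noteq> 0" and k: "k > 0" and t: "t > 0"
  shows "pQ Q q \<beta> k (k + t) x =
           inverse Q * pQ Q q \<beta> k (k + t - 1) x
           + (\<Sum>z=0..k-1. (-1) ^ (k - z + 1) *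
               (pQ Q q \<beta> k (t + z) x - inverse Q * pQ Q q \<beta> k (t + z - 1) x)
               * esym k (k - z) x)"
proof -
  define D where "D = q - inverse q"
  define s2 where "s2 = inverse q ^ 2"
  define b where "b = beta_tilde q \<beta>"
  define iQ where "iQ = inverse Q"
  define p0 where "p0 = pQ Q q \<beta> k 0 x"
  define V where "V = (1 - fps_const (inverse Q) * fps_X) * Abs_fps (\<lambda>i. pQ Q q \<beta> k i x)"
  define e where "e = (\<lambda>j. esym k j x)"
  define p where "p = (\<lambda>j. pQ Q q \<beta> k j x)"
  define n where "n = k + t"
  obtain n' where nn: "n = Suc n'" using t by (cases n) (auto simp: n_def)
  have n'k: "n' \<ge> k" using nn t by (simp add: n_def)
  have FB: "fps_const D * (Ep 1 x k * V) =
     (1 - fps_const iQ * fps_X) * (fps_const (D * p0) * Ep 1 x k + Ep s2 x k - Ep 1 x k)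
     + fps_const (D * b * iQ) * (fps_X * Ep s2 x k)"
    unfolding D_def s2_def b_def iQ_def p0_def V_def by (rule fps_facts2[OF q Dnz])
  have Vnth: "fps_nth V j = p j - iQ * p (j - 1)" if "j \<ge> 1" for j
  proof -
    have "V = Abs_fps p - fps_const iQ * (fps_X * Abs_fps p)"
      unfolding V_def iQ_def p_def by (simp add: algebra_simps)
    then show ?thesis using that by simp
  qed
  have EEbig: "fps_nth (Ep s x k) j = 0" if "j > k" for s j
    using that by (simp add: Ep_nth esym_big)
  have Dp0: "D * p0 = 1 - inverse \<beta> ^ 2 * s2 ^ k"
  proof -
    have a: "(\<beta> * q ^ k) powi (-2) = inverse (\<beta> * q ^ k) ^ 2"
      using powi_neg_nat[of "\<beta> * q ^ k" 2] by simp
    have i1: "inverse (\<beta> * q ^ k) = inverse \<beta> * inverse q ^ k"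
      by (simp add: power_inverse)
    have i2: "(inverse q ^ k) ^ 2 = s2 ^ k"
      unfolding s2_def power_mult[symmetric] by (simp add: mult.commute)
    have b': "inverse (\<beta> * q ^ k) ^ 2 = inverse \<beta> ^ 2 * s2 ^ k"
      unfolding i1 power_mult_distrib i2 ..
    have ab: "(\<beta> * q ^ k) powi (-2) = inverse \<beta> ^ 2 * s2 ^ k" unfolding a b' ..
    show ?thesis using Dnz unfolding p0_def pQ_def D_def ab by simp
  qed
  have Db: "D * b = 1 - inverse \<beta> ^ 2"
  proof -
    have a: "\<beta> powi (-2) = inverse \<beta> ^ 2"
      using powi_neg_nat[of "\<beta>" 2] by simp
    show ?thesis using Dnz unfolding b_def beta_tilde_def D_def by (simp add: a)
  qed
  have WZ: "D * fps_nth (Ep 1 x k * V) n = 0"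
  proof -
    define Y where "Y = fps_const (D * p0) * Ep 1 x k + Ep s2 x k - Ep 1 x k"
    have e1: "(1 - fps_const iQ * fps_X) * Y = Y - fps_const iQ * (fps_X * Y)" by (simp add: algebra_simps)
    have "D * fps_nth (Ep 1 x k * V) n = fps_nth (fps_const D * (Ep 1 x k * V)) n" by simp
    also have "\<dots> = fps_nth Y n - iQ * fps_nth Y n' + D * b * iQ * fps_nth (Ep s2 x k) n'"
      unfolding FB Y_def[symmetric] e1 using nn by simp
    also have "fps_nth Y n = 0" using nn n'k by (simp add: Y_def EEbig)
    also have "fps_nth Y n' = D * p0 * fps_nth (Ep 1 x k) n' + fps_nth (Ep s2 x k) n' - fps_nth (Ep 1 x k) n'"
      by (simp add: Y_def)
    finally have W1: "D * fps_nth (Ep 1 x k * V) n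
        = iQ * (D * b * fps_nth (Ep s2 x k) n' - D * p0 * fps_nth (Ep 1 x k) n' - fps_nth (Ep s2 x k) n' + fps_nth (Ep 1 x k) n')"
      by (simp add: algebra_simps)
    show ?thesis
    proof (cases "n' = k")
      case True
      have "D * b * fps_nth (Ep s2 x k) n' - D * p0 * fps_nth (Ep 1 x k) n' - fps_nth (Ep s2 x k) n' + fps_nth (Ep 1 x k) n'
          = (-1) ^ k * e k * ((1 - inverse \<beta> ^ 2) * s2 ^ k - (1 - inverse \<beta> ^ 2 * s2 ^ k) - s2 ^ k + 1)"
        unfolding Db Dp0 True by (simp add: Ep_nth e_def algebra_simps)
      also have "\<dots> = 0" by (simp add: algebra_simps)
      finally show ?thesis unfolding W1 by simp
    next
      case False
      then have "n' > k" using n'k by simp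
      then show ?thesis unfolding W1 by (simp add: EEbig)
    qed
  qed
  have W0: "(\<Sum>i=0..n. fps_nth (Ep 1 x k) i * fps_nth V (n - i)) = 0"
    using WZ Dnz unfolding D_def[symmetric] by (simp add: fps_mult_nth)
  have Wk: "(\<Sum>i=0..n. fps_nth (Ep 1 x k) i * fps_nth V (n - i)) = (\<Sum>i=0..k. fps_nth (Ep 1 x k) i * fps_nth V (n - i))"
    by (rule sum.mono_neutral_right) (auto simp: n_def EEbig)
  have Wsplit: "(\<Sum>i=0..k. fps_nth (Ep 1 x k) i * fps_nth V (n - i))
      = fps_nth V n + (\<Sum>i=1..k. fps_nth (Ep 1 x k) i * fps_nth V (n - i))"
    by (simp add: sum.atLeast_Suc_atMost Ep_nth esym_0)
  have reidx: "(\<Sum>i=1..k. fps_nth (Ep 1 x k) i * fps_nth V (n - i))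
      = (\<Sum>z=0..k-1. fps_nth (Ep 1 x k) (k - z) * fps_nth V (n - (k - z)))"
    by (rule sum.reindex_bij_witness[of _ "\<lambda>z. k - z" "\<lambda>i. k - i"]) (use k in auto)
  have S: "(\<Sum>z=0..k-1. (-1) ^ (k - z + 1) *
               (pQ Q q \<beta> k (t + z) x - inverse Q * pQ Q q \<beta> k (t + z - 1) x) * esym k (k - z) x)
      = - (\<Sum>z=0..k-1. fps_nth (Ep 1 x k) (k - z) * fps_nth V (n - (k - z)))"
    unfolding sum_negf[symmetric]
  proof (rule sum.cong[OF refl])
    fix z assume z: "z \<in> {0..k-1}"
    then have zk: "z < k" using k by auto
    have nz: "n - (k - z) = t + z" using zk by (simp add: n_def)
    have v: "fps_nth V (t + z) = p (t + z) - iQ * p (t + z - 1)" using t by (intro Vnth) simp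
    have c: "(-1) ^ (k - z + 1) = - ((-1) ^ (k - z) :: complex)" by simp
    show "(-1) ^ (k - z + 1) * (pQ Q q \<beta> k (t + z) x - inverse Q * pQ Q q \<beta> k (t + z - 1) x) * esym k (k - z) x
        = - (fps_nth (Ep 1 x k) (k - z) * fps_nth V (n - (k - z)))"
      unfolding nz v c by (simp add: Ep_nth p_def iQ_def)
  qed
  have Vn: "fps_nth V n = pQ Q q \<beta> k (k + t) x - inverse Q * pQ Q q \<beta> k (k + t - 1) x"
    using Vnth[of n] nn by (simp add: p_def iQ_def n_def)
  have "fps_nth V n + (\<Sum>z=0..k-1. fps_nth (Ep 1 x k) (k - z) * fps_nth V (n - (k - z))) = 0"
    using W0 unfolding Wk Wsplit reidx .
  then show ?thesis unfolding S Vn by (simp add: algebra_simps)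
qed

theorem mainTheorem20:
  fixes q Q \<beta> :: complex and k t :: nat and x :: "nat \<Rightarrow> complex"
  assumes "q \<noteq> 0" and "\<forall>n>0. q ^ n \<noteq> 1"
    and "k > 0" and "t > 0" and "Q \<noteq> 0" and "\<beta> \<noteq> 0"
  shows "(pQ Q q \<beta> k t x =
           (-1) ^ (t - 1) * q powi (- int t) * qint q t * esym k t x
           + beta_tilde q \<beta> * Q powi (- int t)
           + (\<Sum>z=1..t-1. (-1) ^ (t - z + 1) *
               (pQ Q q \<beta> k z x - q powi (-2 * int (t - z)) * beta_tilde q \<beta> * Q powi (- int z))
               * esym k (t - z) x))
    \<and> (pQ Q q \<beta> k (k + t) x =
           inverse Q * pQ Q q \<beta> k (k + t - 1) x
           + (\<Sum>z=0..k-1. (-1) ^ (k - z + 1) *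
               (pQ Q q \<beta> k (t + z) x - inverse Q * pQ Q q \<beta> k (t + z - 1) x)
               * esym k (k - z) x))"
proof -
  have Dnz: "q - inverse q \<noteq> 0" using D_nz assms(1,2) by blast
  show ?thesis
  proof (rule conjI)
    show "pQ Q q \<beta> k t x =
           (-1) ^ (t - 1) * q powi (- int t) * qint q t * esym k t x
           + beta_tilde q \<beta> * Q powi (- int t)
           + (\<Sum>z=1..t-1. (-1) ^ (t - z + 1) *
               (pQ Q q \<beta> k z x - q powi (-2 * int (t - z)) * beta_tilde q \<beta> * Q powi (- int z))
               * esym k (t - z) x)"
      by (rule part1[OF assms(1) Dnz assms(4)])
    show "pQ Q q \<beta> k (k + t) x =
           inverse Q * pQ Q q \<beta> k (k + t - 1) x
           + (\<Sum>z=0..k-1. (-1) ^ (k - z + 1) *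
               (pQ Q q \<beta> k (t + z) x - inverse Q * pQ Q q \<beta> k (t + z - 1) x)
               * esym k (k - z) x)"
      by (rule part2[OF assms(1) Dnz assms(3) assms(4)])
  qed
qed

end
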